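(* A shift space $X$ is eventually dendric if and only if there is an integer $n\ge 0$ such that every word $w\in LS_{\ge n}(X)$ has exactly one letter $b\in A$ with $wb\in LS(X)$ (equivalently $wb\in LS_{\ge n+1}(X)$), and this letter moreover satisfies $\ell(wb)=\ell(w)$.
   Context: $A$ is a finite alphabet; a shift space is a closed shift-invariant subset $X\subseteq A^{\mathbb Z}$; $\mathcal L(X)$ is its set of finite factors, $\mathcal L_n(X)=\mathcal L(X)\cap A^n$, $\mathcal L_{\ge n}(X)=\bigcup_{k\ge n}\mathcal L_k(X)$. For $w\in\mathcal L(X)$, $L_1(w)=\{a\in A: aw\in\mathcal L(X)\}$, $R_1(w)=\{b\in A: wb\in\mathcal L(X)\}$, $\ell(w)=\mathrm{Card}\,L_1(w)$. A word $w$ is left-special if $\ell(w)\ge 2$; $LS_n(X)$ (resp. $LS_{\ge n}(X)$) is the set of left-special words of $\mathcal L(X)$ of length $n$ (resp. at least $n$), and $LS(X)=\bigcup_{n\ge1}LS_n(X)$. The extension graph $\mathcal E_1(w)$ is the undirected bipartite graph with vertex set the disjoint union of $L_1(w)$ and $R_1(w)$ and an edge $(a,b)$ iff $awb\in\mathcal L(X)$. $X$ is eventually dendric with threshold $m\ge0$ if $\mathcal E_1(w)$ is a tree for every $w\in\mathcal L_{\ge m}(X)$, and eventually dendric if this holds for some $m$. *)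

theory Defs
  imports Main
begin

text \<open>Configurations are bi-infinite sequences over a finite alphabet given by the
  type 'a (alphabet A = UNIV). Words are lists.\<close>

definition shift :: "(int \<Rightarrow> 'a) \<Rightarrow> (int \<Rightarrow> 'a)" where
  "shift x = (\<lambda>i. x (i + 1))"

text \<open>Closedness in the product of discrete topologies: a configuration all of
  whose central windows agree with points of X belongs to X.\<close>
definition closed_shift :: "(int \<Rightarrow> 'a) set \<Rightarrow> bool" where
  "closed_shift X \<longleftrightarrow>
     (\<forall>x. (\<forall>n::nat. \<exists>y\<in>X. \<forall>i::int. \<bar>i\<bar> \<le> int n \<longrightarrow> y i = x i) \<longrightarrow> x \<in> X)"

definition shift_space :: "(int \<Rightarrow> 'a::finite) set \<Rightarrow> bool" where
  "shift_space X \<longleftrightarrow> closed_shift X \<and> shift ` X = X"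

definition lang :: "(int \<Rightarrow> 'a) set \<Rightarrow> 'a list set" where
  "lang X = {w. \<exists>x\<in>X. \<exists>i::int. w = map (\<lambda>k. x (i + int k)) [0..<length w]}"

definition L1 :: "(int \<Rightarrow> 'a) set \<Rightarrow> 'a list \<Rightarrow> 'a set" where
  "L1 X w = {a. a # w \<in> lang X}"

definition R1 :: "(int \<Rightarrow> 'a) set \<Rightarrow> 'a list \<Rightarrow> 'a set" where
  "R1 X w = {b. w @ [b] \<in> lang X}"

definition ell :: "(int \<Rightarrow> 'a) set \<Rightarrow> 'a list \<Rightarrow> nat" where
  "ell X w = card (L1 X w)"

definition left_special :: "(int \<Rightarrow> 'a) set \<Rightarrow> 'a list \<Rightarrow> bool" where
  "left_special X w \<longleftrightarrow> w \<in> lang X \<and> ell X w \<ge> 2"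

definition LS :: "(int \<Rightarrow> 'a) set \<Rightarrow> 'a list set" where
  "LS X = {w. left_special X w \<and> length w \<ge> 1}"

definition LS_ge :: "(int \<Rightarrow> 'a) set \<Rightarrow> nat \<Rightarrow> 'a list set" where
  "LS_ge X n = {w. left_special X w \<and> length w \<ge> n}"

text \<open>Simple undirected graphs given by a vertex set V and an adjacency relation E
  (assumed symmetric). Trees: nonempty, connected, without cycles.\<close>
definition ugraph_connected :: "'v set \<Rightarrow> ('v \<Rightarrow> 'v \<Rightarrow> bool) \<Rightarrow> bool" where
  "ugraph_connected V E \<longleftrightarrow>
     (\<forall>u\<in>V. \<forall>v\<in>V. (u, v) \<in> {(a, b). a \<in> V \<and> b \<in> V \<and> E a b}\<^sup>*)"

definition ugraph_cycle :: "'v set \<Rightarrow> ('v \<Rightarrow> 'v \<Rightarrow> bool) \<Rightarrow> 'v list \<Rightarrow> bool" where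
  "ugraph_cycle V E vs \<longleftrightarrow> length vs \<ge> 3 \<and> distinct vs \<and> set vs \<subseteq> V \<and>
     (\<forall>i. Suc i < length vs \<longrightarrow> E (vs ! i) (vs ! Suc i)) \<and> E (last vs) (hd vs)"

definition ugraph_tree :: "'v set \<Rightarrow> ('v \<Rightarrow> 'v \<Rightarrow> bool) \<Rightarrow> bool" where
  "ugraph_tree V E \<longleftrightarrow> V \<noteq> {} \<and> ugraph_connected V E \<and> (\<nexists>vs. ugraph_cycle V E vs)"

text \<open>Extension graph E_1(w): vertices Inl a (a in L_1(w)) and Inr b (b in R_1(w));
  undirected edge between Inl a and Inr b iff a w b is in L(X).\<close>
definition ext_vertices :: "(int \<Rightarrow> 'a) set \<Rightarrow> 'a list \<Rightarrow> ('a + 'a) set" where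
  "ext_vertices X w = Inl ` L1 X w \<union> Inr ` R1 X w"

definition ext_edge :: "(int \<Rightarrow> 'a) set \<Rightarrow> 'a list \<Rightarrow> ('a + 'a) \<Rightarrow> ('a + 'a) \<Rightarrow> bool" where
  "ext_edge X w u v \<longleftrightarrow>
     (\<exists>a b. ((u = Inl a \<and> v = Inr b) \<or> (u = Inr b \<and> v = Inl a)) \<and> a # w @ [b] \<in> lang X)"

definition eventually_dendric_thr :: "(int \<Rightarrow> 'a) set \<Rightarrow> nat \<Rightarrow> bool" where
  "eventually_dendric_thr X m \<longleftrightarrow>
     (\<forall>w\<in>lang X. length w \<ge> m \<longrightarrow> ugraph_tree (ext_vertices X w) (ext_edge X w))"

definition eventually_dendric :: "(int \<Rightarrow> 'a) set \<Rightarrow> bool" where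
  "eventually_dendric X \<longleftrightarrow> (\<exists>m. eventually_dendric_thr X m)"

end

theory Submission imports Defs begin

lemma lang_iff: "w \<in> lang X \<longleftrightarrow> (\<exists>x\<in>X. \<exists>i. \<forall>k<length w. w!k = x (i + int k))"
proof
  assume "w \<in> lang X"
  then obtain x i where x: "x \<in> X" and eq: "w = map (\<lambda>k. x (i + int k)) [0..<length w]"
    unfolding lang_def by blast
  have "\<forall>k<length w. w!k = x (i + int k)"
  proof (intro allI impI)
    fix k assume k: "k < length w"
    have "w!k = map (\<lambda>k. x (i + int k)) [0..<length w] ! k" using eq by (rule arg_cong)
    also have "\<dots> = x (i + int k)" using k by simp
    finally show "w!k = x (i + int k)" .
  qed
  then show "\<exists>x\<in>X. \<exists>i. \<forall>k<length w. w!k = x (i + int k)" using x by blast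
next
  assume "\<exists>x\<in>X. \<exists>i. \<forall>k<length w. w!k = x (i + int k)"
  then obtain x i where x: "x \<in> X" and h: "\<forall>k<length w. w!k = x (i + int k)" by blast
  have "w = map (\<lambda>k. x (i + int k)) [0..<length w]"
    by (rule nth_equalityI) (simp_all add: h)
  then show "w \<in> lang X" using x unfolding lang_def by blast
qed

lemma lang_Cons: "a # w \<in> lang X \<Longrightarrow> w \<in> lang X"
proof -
  assume "a # w \<in> lang X"
  then obtain x i where "x \<in> X" "\<forall>k<Suc (length w). (a#w)!k = x (i + int k)" by (auto simp: lang_iff)
  then show ?thesis unfolding lang_iff
    by (intro bexI[of _ x] exI[of _ "i+1"]) (auto, metis Suc_less_eq nth_Cons_Suc of_nat_Suc add.assoc add.commute)
qed

lemma lang_snoc: "w @ [b] \<in> lang X \<Longrightarrow> w \<in> lang X"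
proof -
  assume "w @ [b] \<in> lang X"
  then obtain x i where "x \<in> X" "\<forall>k<Suc (length w). (w@[b])!k = x (i + int k)" by (auto simp: lang_iff)
  then show ?thesis unfolding lang_iff
    by (intro bexI[of _ x] exI[of _ "i"]) (auto simp: nth_append, metis less_SucI nth_append)
qed

lemma lang_ext_left: "w \<in> lang X \<Longrightarrow> \<exists>a. a # w \<in> lang X"
proof -
  assume "w \<in> lang X"
  then obtain x i where x: "x \<in> X" "\<forall>k<length w. w!k = x (i + int k)" by (auto simp: lang_iff)
  have "\<forall>k<length (x (i - 1) # w). (x (i - 1) # w)!k = x ((i - 1) + int k)"
  proof (intro allI impI)
    fix k assume "k < length (x (i - 1) # w)"
    then show "(x (i - 1) # w)!k = x ((i - 1) + int k)" using x(2)
      by (cases k) auto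
  qed
  then show ?thesis using x(1) unfolding lang_iff by blast
qed

lemma lang_ext_right: "w \<in> lang X \<Longrightarrow> \<exists>b. w @ [b] \<in> lang X"
proof -
  assume "w \<in> lang X"
  then obtain x i where x: "x \<in> X" "\<forall>k<length w. w!k = x (i + int k)" by (auto simp: lang_iff)
  have "\<forall>k<length (w @ [x (i + int (length w))]). (w @ [x (i + int (length w))])!k = x (i + int k)"
    using x(2) by (auto simp: nth_append less_Suc_eq)
  then show ?thesis using x(1) unfolding lang_iff by blast
qed

lemma L1_fin: "finite (L1 (X :: (int \<Rightarrow> 'a::finite) set) w)" by simp

lemma card2: "finite S \<Longrightarrow> c \<in> S \<Longrightarrow> d \<in> S \<Longrightarrow> c \<noteq> d \<Longrightarrow> 2 \<le> card S"
  by (metis card_2_iff card_mono empty_subsetI insert_subset)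

lemma cycle_deg:
  assumes cyc: "ugraph_cycle V E vs" and sym: "\<And>u v. E u v \<Longrightarrow> E v u" and v: "v \<in> set vs"
  shows "\<exists>u1 u2. u1 \<in> set vs \<and> u2 \<in> set vs \<and> u1 \<noteq> u2 \<and> E v u1 \<and> E v u2"
proof -
  define n where "n = length vs"
  have n3: "n \<ge> 3" and dist: "distinct vs" and step: "\<And>i. Suc i < n \<Longrightarrow> E (vs!i) (vs!Suc i)"
    and lh: "E (vs!(n-1)) (vs!0)"
  proof -
    have "vs \<noteq> []" using cyc unfolding ugraph_cycle_def by auto
    then show "n \<ge> 3" "distinct vs" "\<And>i. Suc i < n \<Longrightarrow> E (vs!i) (vs!Suc i)" "E (vs!(n-1)) (vs!0)"
      using cyc unfolding ugraph_cycle_def n_def by (auto simp: last_conv_nth hd_conv_nth)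
  qed
  obtain i where i: "i < n" "v = vs!i" using v unfolding n_def by (metis in_set_conv_nth)
  have ne: "\<And>j k. j < n \<Longrightarrow> k < n \<Longrightarrow> j \<noteq> k \<Longrightarrow> vs!j \<noteq> vs!k"
    using dist unfolding n_def by (simp add: nth_eq_iff_index_eq)
  have mem: "\<And>j. j < n \<Longrightarrow> vs!j \<in> set vs" unfolding n_def by simp
  have bk: "E (vs!i) (vs!(i-1))" if "0 < i" "i < n" for i
  proof -
    have "E (vs!(i-1)) (vs!Suc (i-1))" using step[of "i-1"] that by simp
    then show ?thesis using that sym by simp
  qed
  show ?thesis
  proof (cases "i = 0")
    case True
    have "E v (vs!1)" using step[of 0] n3 True i by simp
    moreover have "E v (vs!(n-1))" using sym[OF lh] True i by simp
    moreover have "vs!1 \<noteq> vs!(n-1)" using ne[of 1 "n-1"] n3 by simp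
    moreover have "vs!1 \<in> set vs" "vs!(n-1) \<in> set vs" using mem[of 1] mem[of "n-1"] n3 by auto
    ultimately show ?thesis by blast
  next
    case False
    show ?thesis
    proof (cases "i = n - 1")
      case True
      have "E v (vs!(i-1))" using bk[of i] False i by simp
      moreover have "E v (vs!0)" using lh True i by simp
      moreover have "vs!(i-1) \<noteq> vs!0" using ne[of "i-1" 0] n3 True by simp
      moreover have "vs!(i-1) \<in> set vs" "vs!0 \<in> set vs" using mem[of "i-1"] mem[of 0] i by auto
      ultimately show ?thesis by blast
    next
      case F2: False
      have "E v (vs!(i-1))" using bk[of i] False i by simp
      moreover have "E v (vs!(i+1))" using step[of i] F2 i by simp
      moreover have "vs!(i-1) \<noteq> vs!(i+1)" using ne[of "i-1" "i+1"] F2 i False by simp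
      moreover have "i+1 < n" using F2 i by simp
      moreover have "vs!(i-1) \<in> set vs" "vs!(i+1) \<in> set vs" using mem[of "i-1"] mem[of "i+1"] i F2 by auto
      ultimately show ?thesis by blast
    qed
  qed
qed


lemma ext_edge_sym: "ext_edge X w u v \<Longrightarrow> ext_edge X w v u"
  unfolding ext_edge_def by blast

lemma ext_edge_Inl: "ext_edge X w (Inl a) v \<longleftrightarrow> (\<exists>b. v = Inr b \<and> a # w @ [b] \<in> lang X)"
  unfolding ext_edge_def by auto

lemma ext_edge_Inr: "ext_edge X w (Inr b) v \<longleftrightarrow> (\<exists>a. v = Inl a \<and> a # w @ [b] \<in> lang X)"
  unfolding ext_edge_def by auto

lemma no_cycle:
  fixes X :: "(int \<Rightarrow> 'a::finite) set"
  assumes H: "\<And>b b'. 2 \<le> ell X (w @ [b]) \<Longrightarrow> 2 \<le> ell X (w @ [b']) \<Longrightarrow> b = b'"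
  shows "\<not> ugraph_cycle (ext_vertices X w) (ext_edge X w) vs"
proof
  assume cyc: "ugraph_cycle (ext_vertices X w) (ext_edge X w) vs"
  have symE: "\<And>u v. ext_edge X w u v \<Longrightarrow> ext_edge X w v u" by (rule ext_edge_sym)
  have deg: "\<exists>u1 u2. u1 \<in> set vs \<and> u2 \<in> set vs \<and> u1 \<noteq> u2 \<and> ext_edge X w v u1 \<and> ext_edge X w v u2"
    if "v \<in> set vs" for v
    by (rule cycle_deg[OF cyc symE that])
  have R2: "2 \<le> ell X (w @ [b])" if rb: "Inr b \<in> set vs" for b
  proof -
    obtain u1 u2 where u: "u1 \<in> set vs" "u2 \<in> set vs" "u1 \<noteq> u2"
      "ext_edge X w (Inr b) u1" "ext_edge X w (Inr b) u2" using deg[OF rb] by blast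
    obtain c where c: "u1 = Inl c" "c # w @ [b] \<in> lang X" using u(4) by (auto simp: ext_edge_Inr)
    obtain d where d: "u2 = Inl d" "d # w @ [b] \<in> lang X" using u(5) by (auto simp: ext_edge_Inr)
    have "c \<in> L1 X (w @ [b])" "d \<in> L1 X (w @ [b])" using c d by (simp_all add: L1_def)
    moreover have "c \<noteq> d" using u(3) c d by simp
    ultimately show ?thesis unfolding ell_def by (intro card2[OF L1_fin])
  qed
  have "length vs \<ge> 3" using cyc unfolding ugraph_cycle_def by blast
  then have "hd vs \<in> set vs" by (intro hd_in_set) auto
  have "\<exists>a. Inl a \<in> set vs"
  proof (cases "hd vs")
    case (Inl a) then show ?thesis using \<open>hd vs \<in> set vs\<close> by auto
  next
    case (Inr b)
    then obtain u1 where "u1 \<in> set vs" "ext_edge X w (Inr b) u1"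
      using deg[OF \<open>hd vs \<in> set vs\<close>] by auto
    then show ?thesis by (auto simp: ext_edge_Inr)
  qed
  then obtain a where a: "Inl a \<in> set vs" by blast
  obtain u1 u2 where u: "u1 \<in> set vs" "u2 \<in> set vs" "u1 \<noteq> u2"
      "ext_edge X w (Inl a) u1" "ext_edge X w (Inl a) u2" using deg[OF a] by blast
  then obtain b1 b2 where b12: "u1 = Inr b1" "u2 = Inr b2" by (auto simp: ext_edge_Inl)
  have "2 \<le> ell X (w @ [b1])" using u(1) b12(1) by (intro R2) simp
  moreover have "2 \<le> ell X (w @ [b2])" using u(2) b12(2) by (intro R2) simp
  ultimately have "b1 = b2" by (rule H)
  then show False using u(3) b12 by simp
qed

lemma connected_hub:
  fixes X :: "(int \<Rightarrow> 'a::finite) set"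
  assumes w: "w \<in> lang X" and b0: "w @ [b0] \<in> lang X" and sub: "L1 X w \<subseteq> L1 X (w @ [b0])"
  shows "ugraph_connected (ext_vertices X w) (ext_edge X w)"
proof -
  let ?V = "ext_vertices X w"
  let ?R = "{(a, b). a \<in> ?V \<and> b \<in> ?V \<and> ext_edge X w a b}"
  have hubV: "Inr b0 \<in> ?V" using b0 by (auto simp: ext_vertices_def R1_def)
  have to: "(u, Inr b0) \<in> ?R\<^sup>*" if "u \<in> ?V" for u
  proof (cases u)
    case (Inl a)
    then have "a \<in> L1 X w" using that by (auto simp: ext_vertices_def)
    then have "(u, Inr b0) \<in> ?R" using sub hubV that Inl by (auto simp: ext_edge_def L1_def)
    then show ?thesis by blast
  next
    case (Inr b)
    then have "w @ [b] \<in> lang X" using that by (auto simp: ext_vertices_def R1_def)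
    then obtain a where a: "a # w @ [b] \<in> lang X" using lang_ext_left by blast
    then have aL: "a \<in> L1 X w" using lang_snoc[of "a # w" b X] by (auto simp: L1_def)
    then have "Inl a \<in> ?V" by (auto simp: ext_vertices_def)
    then have "(u, Inl a) \<in> ?R" "(Inl a, Inr b0) \<in> ?R"
      using a Inr that sub aL hubV by (auto simp: ext_edge_def L1_def)
    then show ?thesis by (meson converse_rtrancl_into_rtrancl r_into_rtrancl)
  qed
  have sR: "sym ?R" by (auto simp: sym_def intro: ext_edge_sym)
  have sRs: "sym (?R\<^sup>*)" by (rule sym_rtrancl[OF sR])
  show ?thesis unfolding ugraph_connected_def
  proof (intro ballI)
    fix u v assume uv: "u \<in> ?V" "v \<in> ?V"
    have 1: "(u, Inr b0) \<in> ?R\<^sup>*" using to uv(1) by blast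
    have "(v, Inr b0) \<in> ?R\<^sup>*" using to uv(2) by blast
    then have 2: "(Inr b0, v) \<in> ?R\<^sup>*" using sRs by (rule symD[rotated])
    show "(u, v) \<in> ?R\<^sup>*" using rtrancl_trans[OF 1 2] .
  qed
qed

lemma tree_lemma:
  fixes X :: "(int \<Rightarrow> 'a::finite) set"
  assumes w: "w \<in> lang X" and b0: "w @ [b0] \<in> lang X" and sub: "L1 X w \<subseteq> L1 X (w @ [b0])"
    and H: "\<And>b b'. 2 \<le> ell X (w @ [b]) \<Longrightarrow> 2 \<le> ell X (w @ [b']) \<Longrightarrow> b = b'"
  shows "ugraph_tree (ext_vertices X w) (ext_edge X w)"
  unfolding ugraph_tree_def using connected_hub[OF w b0 sub] no_cycle[OF H] b0
  by (auto simp: ext_vertices_def R1_def)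

lemma hub_from_connected:
  fixes X :: "(int \<Rightarrow> 'a::finite) set"
  assumes con: "ugraph_connected (ext_vertices X w) (ext_edge X w)" and l2: "2 \<le> ell X w"
    and H: "\<And>c. c \<noteq> b0 \<Longrightarrow> ell X (w @ [c]) \<le> 1"
  shows "L1 X w \<subseteq> L1 X (w @ [b0])"
proof
  fix a assume a: "a \<in> L1 X w"
  show "a \<in> L1 X (w @ [b0])"
  proof (rule ccontr)
    assume na: "a \<notin> L1 X (w @ [b0])"
    have "L1 X w - {a} \<noteq> {}"
    proof
      assume "L1 X w - {a} = {}"
      then have "L1 X w \<subseteq> {a}" by blast
      then have "card (L1 X w) \<le> card {a}" by (intro card_mono) auto
      then have "card (L1 X w) \<le> 1" by simp
      with l2 show False unfolding ell_def by simp
    qed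
    then obtain a' where a': "a' \<in> L1 X w" "a' \<noteq> a" by blast
    let ?V = "ext_vertices X w"
    let ?R = "{(a, b). a \<in> ?V \<and> b \<in> ?V \<and> ext_edge X w a b}"
    let ?C = "{Inl a} \<union> {Inr c |c. a # w @ [c] \<in> lang X}"
    have path: "(Inl a, Inl a') \<in> ?R\<^sup>*" using con a a' unfolding ugraph_connected_def
      by (auto simp: ext_vertices_def)
    have "q \<in> ?C" if "(Inl a, q) \<in> ?R\<^sup>*" for q
      using that
    proof (induction rule: rtrancl_induct)
      case base then show ?case by simp
    next
      case (step p q)
      then have e: "ext_edge X w p q" by simp
      from step.IH show ?case
      proof
        assume "p \<in> {Inl a}"
        then show ?thesis using e by (auto simp: ext_edge_Inl)
      next
        assume "p \<in> {Inr c |c. a # w @ [c] \<in> lang X}"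
        then obtain c where c: "p = Inr c" "a # w @ [c] \<in> lang X" by blast
        then obtain d where d: "q = Inl d" "d # w @ [c] \<in> lang X" using e by (auto simp: ext_edge_Inr)
        have "c \<noteq> b0" using na c by (auto simp: L1_def)
        then have "card (L1 X (w @ [c])) \<le> 1" using H unfolding ell_def by simp
        moreover have "a \<in> L1 X (w @ [c])" "d \<in> L1 X (w @ [c])" using c d by (auto simp: L1_def)
        ultimately have "d = a" using card2[of "L1 X (w @ [c])" a d] by fastforce
        then show ?thesis using d by simp
      qed
    qed
    from this[OF path] a' show False by auto
  qed
qed


lemma two_elems:
  fixes S :: "'b::finite set"
  assumes "2 \<le> card S" shows "\<exists>a\<in>S. \<exists>a'\<in>S. a \<noteq> a'"
proof (rule ccontr)
  assume "\<not> ?thesis"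
  then have "card S \<le> Suc 0" using card_le_Suc0_iff_eq[of S] by auto
  with assms show False by simp
qed

lemma L1_snoc_sub: "L1 X (w @ [b]) \<subseteq> L1 X w"
  unfolding L1_def using lang_snoc[of "_ # w" b X] by auto

lemma LS_snoc_iff:
  fixes X :: "(int \<Rightarrow> 'a::finite) set"
  shows "w @ [c] \<in> LS X \<longleftrightarrow> 2 \<le> ell X (w @ [c])"
proof
  assume "2 \<le> ell X (w @ [c])"
  then obtain a where "a \<in> L1 X (w @ [c])" using two_elems[of "L1 X (w @ [c])"] unfolding ell_def by blast
  then have "w @ [c] \<in> lang X" unfolding L1_def by (auto intro: lang_Cons)
  with \<open>2 \<le> ell X (w @ [c])\<close> show "w @ [c] \<in> LS X" by (simp add: LS_def left_special_def)
qed (simp add: LS_def left_special_def)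

lemma four_cycle:
  assumes "a \<noteq> a'" "b \<noteq> b'" "a # w @ [b] \<in> lang X" "a' # w @ [b] \<in> lang X"
    "a # w @ [b'] \<in> lang X" "a' # w @ [b'] \<in> lang X"
  shows "ugraph_cycle (ext_vertices X w) (ext_edge X w) [Inl a, Inr b, Inl a', Inr b']"
proof -
  have "a # w \<in> lang X" using lang_snoc[of "a # w" b X] assms(3) by simp
  moreover have "a' # w \<in> lang X" using lang_snoc[of "a' # w" b X] assms(4) by simp
  moreover have "w @ [b] \<in> lang X" by (rule lang_Cons[OF assms(3)])
  moreover have "w @ [b'] \<in> lang X" by (rule lang_Cons[OF assms(5)])
  ultimately have sub: "set [Inl a, Inr b, Inl a', Inr b'] \<subseteq> ext_vertices X w"
    by (auto simp: ext_vertices_def L1_def R1_def)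
  have edges: "\<forall>i. Suc i < length [Inl a, Inr b, Inl a', Inr b'] \<longrightarrow>
      ext_edge X w ([Inl a, Inr b, Inl a', Inr b'] ! i) ([Inl a, Inr b, Inl a', Inr b'] ! Suc i)"
  proof (intro allI impI)
    fix i assume "Suc i < length [Inl a, Inr b, Inl a', Inr b']"
    then have "i = 0 \<or> i = 1 \<or> i = 2" by auto
    moreover have "ext_edge X w (Inl a) (Inr b)" using assms(3) unfolding ext_edge_def by blast
    moreover have "ext_edge X w (Inr b) (Inl a')" using assms(4) unfolding ext_edge_def by blast
    moreover have "ext_edge X w (Inl a') (Inr b')" using assms(6) unfolding ext_edge_def by blast
    ultimately show "ext_edge X w ([Inl a, Inr b, Inl a', Inr b'] ! i) ([Inl a, Inr b, Inl a', Inr b'] ! Suc i)"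
      by auto
  qed
  have "ext_edge X w (Inr b') (Inl a)" using assms(5) unfolding ext_edge_def by blast
  then show ?thesis unfolding ugraph_cycle_def using sub edges assms(1,2) by simp
qed

lemma stab:
  fixes f :: "nat \<Rightarrow> nat"
  assumes mono: "\<And>k. f k \<le> f (Suc k)" and bd: "\<And>k. f k \<le> B"
  shows "\<exists>N. \<forall>k\<ge>N. f k = f N"
proof -
  have "range f \<subseteq> {..B}" using bd by auto
  then have fin: "finite (range f)" using finite_subset by blast
  have "Max (range f) \<in> range f" using fin by (intro Max_in) auto
  then obtain N where N: "f N = Max (range f)" by auto
  have "\<forall>k\<ge>N. f k = f N"
  proof (intro allI impI)
    fix k assume "N \<le> k"
    then have "f N \<le> f k" by (rule lift_Suc_mono_le[of f, OF mono])
    moreover have "f k \<le> Max (range f)" using fin by (intro Max_ge) auto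
    moreover note N
    ultimately show "f k = f N" by simp
  qed
  then show ?thesis by blast
qed

theorem mainTheorem3:
  fixes X :: "(int \<Rightarrow> 'a::finite) set"
  assumes "shift_space X"
  shows "eventually_dendric X \<longleftrightarrow>
    (\<exists>n::nat. \<forall>w\<in>LS_ge X n.
       \<exists>b. (\<forall>c. w @ [c] \<in> LS X \<longleftrightarrow> c = b) \<and> ell X (w @ [b]) = ell X w)"
proof
  assume "eventually_dendric X"
  then obtain m where thr: "\<And>w. w \<in> lang X \<Longrightarrow> m \<le> length w \<Longrightarrow> ugraph_tree (ext_vertices X w) (ext_edge X w)"
    unfolding eventually_dendric_def eventually_dendric_thr_def by blast
  have con: "ugraph_connected (ext_vertices X w) (ext_edge X w)" if "left_special X w" "m \<le> length w" for w
  proof -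
    have "w \<in> lang X" using that(1) by (simp add: left_special_def)
    then show ?thesis using thr[of w] that(2) unfolding ugraph_tree_def by simp
  qed
  have ext: "\<exists>b. w @ [b] \<in> LS X" if ls: "left_special X w" and lw: "m \<le> length w" for w
  proof (rule ccontr)
    assume "\<not> ?thesis"
    then have le1: "ell X (w @ [c]) \<le> 1" for c using LS_snoc_iff[of w c X] by simp
    have l2: "2 \<le> ell X w" using ls by (simp add: left_special_def)
    have "L1 X w \<subseteq> L1 X (w @ [undefined])"
      by (rule hub_from_connected[OF con[OF ls lw] l2 le1])
    then have "ell X w \<le> ell X (w @ [undefined])" unfolding ell_def by (intro card_mono) auto
    then show False using ls le1[of undefined] by (simp add: left_special_def)
  qed
  have elleq: "ell X (w @ [b]) = ell X w"
    if ls: "left_special X w" and lw: "m \<le> length w" and u: "\<And>c. w @ [c] \<in> LS X \<longleftrightarrow> c = b" for w b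
  proof -
    have le1: "ell X (w @ [c]) \<le> 1" if "c \<noteq> b" for c using LS_snoc_iff[of w c X] u[of c] that by simp
    have l2: "2 \<le> ell X w" using ls by (simp add: left_special_def)
    have "L1 X w \<subseteq> L1 X (w @ [b])"
      by (rule hub_from_connected[OF con[OF ls lw] l2 le1])
    then have "L1 X w = L1 X (w @ [b])" using L1_snoc_sub[of X w b] by (rule subset_antisym)
    then show ?thesis unfolding ell_def by simp
  qed
  define LSk where "LSk k = {u. left_special X u \<and> length u = k}" for k
  define T where "T k = {(u, a, a'). length u = k \<and> a \<noteq> a' \<and> a # u \<in> lang X \<and> a' # u \<in> lang X}" for k
  have finlen: "finite {u :: 'a list. length u = k}" for k
    using finite_lists_length_eq[OF finite_UNIV, of k] by simp
  have finLS: "finite (LSk k)" for k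
    by (rule finite_subset[OF _ finlen[of k]]) (auto simp: LSk_def)
  have finT: "finite (T k)" for k
    by (rule finite_subset[of _ "{u :: 'a list. length u = k} \<times> UNIV \<times> UNIV"])
       (auto simp: T_def intro: finite_cartesian_product finlen)
  have LT: "card (LSk k) \<le> card (T k)" for k
  proof -
    have "LSk k \<subseteq> fst ` T k"
    proof
      fix u assume "u \<in> LSk k"
      then have u: "left_special X u" "length u = k" by (auto simp: LSk_def)
      then obtain a a' where "a \<in> L1 X u" "a' \<in> L1 X u" "a \<noteq> a'"
        using two_elems[of "L1 X u"] unfolding left_special_def ell_def by blast
      then have "(u, a, a') \<in> T k" using u by (auto simp: T_def L1_def)
      then show "u \<in> fst ` T k" by force
    qed
    then have "card (LSk k) \<le> card (fst ` T k)" using finT by (intro card_mono) auto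
    also have "\<dots> \<le> card (T k)" by (rule card_image_le[OF finT])
    finally show ?thesis .
  qed
  have TT: "card (T (Suc k)) \<le> card (T k)" if km: "m \<le> k" for k
  proof (rule card_inj_on_le[OF _ _ finT])
    let ?f = "\<lambda>(v :: 'a list, a :: 'a, a' :: 'a). (butlast v, a, a')"
    show "?f ` T (Suc k) \<subseteq> T k"
    proof
      fix y assume "y \<in> ?f ` T (Suc k)"
      then obtain v a a' where v: "(v, a, a') \<in> T (Suc k)" "y = (butlast v, a, a')" by auto
      then have "v \<noteq> []" by (auto simp: T_def)
      then obtain b where vb: "v = butlast v @ [b]" by (metis append_butlast_last_id)
      have "a # butlast v @ [b] \<in> lang X" "a' # butlast v @ [b] \<in> lang X"
        using v(1) vb by (auto simp: T_def)
      then have "a # butlast v \<in> lang X" "a' # butlast v \<in> lang X"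
        using lang_snoc[of "a # butlast v" b X] lang_snoc[of "a' # butlast v" b X] by simp_all
      then show "y \<in> T k" using v by (auto simp: T_def)
    qed
    show "inj_on ?f (T (Suc k))"
    proof (rule inj_onI)
      fix p q assume p: "p \<in> T (Suc k)" and q: "q \<in> T (Suc k)" and eq: "?f p = ?f q"
      obtain v a a' where pv: "p = (v, a, a')" by (cases p) auto
      obtain v' c c' where qv: "q = (v', c, c')" by (cases q) auto
      have ac: "c = a" "c' = a'" and bv: "butlast v' = butlast v" using eq pv qv by auto
      define u where "u = butlast v"
      have "v \<noteq> []" "v' \<noteq> []" using p q pv qv by (auto simp: T_def)
      then obtain b b' where vv: "v = u @ [b]" "v' = u @ [b']" using bv unfolding u_def
        by (metis append_butlast_last_id)
      have lu: "length u = k" using p pv unfolding vv(1) by (auto simp: T_def)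
      have l1: "a # u @ [b] \<in> lang X" "a' # u @ [b] \<in> lang X" "a \<noteq> a'"
        using p unfolding pv vv(1) by (auto simp: T_def)
      have l2: "a # u @ [b'] \<in> lang X" "a' # u @ [b'] \<in> lang X"
        using q unfolding qv vv(2) ac by (auto simp: T_def)
      have "b = b'"
      proof (rule ccontr)
        assume ne: "b \<noteq> b'"
        have "u \<in> lang X" using lang_Cons[OF l1(1)] lang_snoc[of u b X] by simp
        then have "ugraph_tree (ext_vertices X u) (ext_edge X u)" using thr lu km by simp
        moreover have "ugraph_cycle (ext_vertices X u) (ext_edge X u) [Inl a, Inr b, Inl a', Inr b']"
          using four_cycle[OF l1(3) ne l1(1,2) l2] .
        ultimately show False unfolding ugraph_tree_def by blast
      qed
      then show "p = q" unfolding pv qv vv ac by simp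
    qed
  qed
  have Tb: "card (T (m + j)) \<le> card (T m)" for j
  proof (induction j)
    case (Suc j) then show ?case using TT[of "m + j"] by simp
  qed simp
  have img: "butlast ` LSk (Suc k) = LSk k" if km: "m \<le> k" for k
  proof
    show "butlast ` LSk (Suc k) \<subseteq> LSk k"
    proof
      fix u assume "u \<in> butlast ` LSk (Suc k)"
      then obtain v where v: "v \<in> LSk (Suc k)" "u = butlast v" by auto
      then have "v \<noteq> []" by (auto simp: LSk_def)
      then obtain b where vb: "v = u @ [b]" using v(2) by (metis append_butlast_last_id)
      have "u @ [b] \<in> lang X" "2 \<le> ell X (u @ [b])" "length (u @ [b]) = Suc k"
        using v(1) unfolding vb by (auto simp: LSk_def left_special_def)
      moreover have "ell X (u @ [b]) \<le> ell X u" unfolding ell_def by (intro card_mono L1_fin L1_snoc_sub)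
      ultimately show "u \<in> LSk k" using lang_snoc[of u b X] by (auto simp: LSk_def left_special_def)
    qed
    show "LSk k \<subseteq> butlast ` LSk (Suc k)"
    proof
      fix u assume u: "u \<in> LSk k"
      then obtain b where "u @ [b] \<in> LS X" using ext km by (auto simp: LSk_def)
      then have "u @ [b] \<in> LSk (Suc k)" using u by (auto simp: LSk_def LS_def)
      then show "u \<in> butlast ` LSk (Suc k)" by (metis butlast_snoc image_eqI)
    qed
  qed
  have LL: "card (LSk k) \<le> card (LSk (Suc k))" if "m \<le> k" for k
    using card_image_le[OF finLS, of butlast "Suc k"] img[OF that] by simp
  obtain N where N: "\<And>j. N \<le> j \<Longrightarrow> card (LSk (m + j)) = card (LSk (m + N))"
    using stab[of "\<lambda>j. card (LSk (m + j))" "card (T m)"] LL LT Tb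
    by (metis add_Suc_right le_add1 order_trans)
  show "\<exists>n::nat. \<forall>w\<in>LS_ge X n.
       \<exists>b. (\<forall>c. w @ [c] \<in> LS X \<longleftrightarrow> c = b) \<and> ell X (w @ [b]) = ell X w"
  proof (intro exI[of _ "m + N"] ballI)
    fix w assume "w \<in> LS_ge X (m + N)"
    then have ls: "left_special X w" and lw: "m + N \<le> length w" by (auto simp: LS_ge_def)
    define k where "k = length w"
    have km: "m \<le> k" using lw k_def by simp
    obtain b where b: "w @ [b] \<in> LS X" using ext ls km k_def by blast
    have "card (LSk (Suc k)) = card (LSk k)"
      using N[of "k - m"] N[of "Suc k - m"] lw k_def km by simp
    then have "card (butlast ` LSk (Suc k)) = card (LSk (Suc k))" using img[OF km] by simp
    then have inj: "inj_on butlast (LSk (Suc k))" by (rule eq_card_imp_inj_on[OF finLS])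
    have u: "w @ [c] \<in> LS X \<longleftrightarrow> c = b" for c
    proof
      assume c: "w @ [c] \<in> LS X"
      have "w @ [c] \<in> LSk (Suc k)" "w @ [b] \<in> LSk (Suc k)" using b c k_def by (auto simp: LSk_def LS_def)
      then have "w @ [c] = w @ [b]" using inj_onD[OF inj, of "w @ [c]" "w @ [b]"] by simp
      then show "c = b" by simp
    qed (use b in simp)
    show "\<exists>b. (\<forall>c. w @ [c] \<in> LS X \<longleftrightarrow> c = b) \<and> ell X (w @ [b]) = ell X w"
      using u elleq[OF ls] km k_def by blast
  qed
next
  assume "\<exists>n::nat. \<forall>w\<in>LS_ge X n.
       \<exists>b. (\<forall>c. w @ [c] \<in> LS X \<longleftrightarrow> c = b) \<and> ell X (w @ [b]) = ell X w"
  then obtain n where n: "\<And>w. w \<in> LS_ge X n \<Longrightarrow>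
       \<exists>b. (\<forall>c. w @ [c] \<in> LS X \<longleftrightarrow> c = b) \<and> ell X (w @ [b]) = ell X w" by blast
  have "ugraph_tree (ext_vertices X w) (ext_edge X w)" if w: "w \<in> lang X" "n \<le> length w" for w
  proof (cases "2 \<le> ell X w")
    case True
    then have "w \<in> LS_ge X n" using w by (auto simp: LS_ge_def left_special_def)
    then obtain b where u: "\<And>c. w @ [c] \<in> LS X \<longleftrightarrow> c = b" and e: "ell X (w @ [b]) = ell X w"
      using n by blast
    have bl: "w @ [b] \<in> lang X" using u[of b] by (simp add: LS_def left_special_def)
    have "L1 X (w @ [b]) = L1 X w"
      using L1_snoc_sub[of X w b] e unfolding ell_def by (intro card_subset_eq) auto
    moreover have "b1 = b2" if "2 \<le> ell X (w @ [b1])" "2 \<le> ell X (w @ [b2])" for b1 b2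
      using that u LS_snoc_iff by metis
    ultimately show ?thesis using tree_lemma[OF w(1) bl] by auto
  next
    case False
    obtain b where bl: "w @ [b] \<in> lang X" using lang_ext_right[OF w(1)] by blast
    obtain a where a: "a # w @ [b] \<in> lang X" using lang_ext_left[OF bl] by blast
    have le1: "card (L1 X w) \<le> Suc 0" using False unfolding ell_def by simp
    have "a \<in> L1 X w" using a L1_snoc_sub[of X w b] by (auto simp: L1_def)
    have sub: "L1 X w \<subseteq> L1 X (w @ [b])"
    proof
      fix a' assume "a' \<in> L1 X w"
      then have "a' = a" using le1 \<open>a \<in> L1 X w\<close> card_le_Suc0_iff_eq[OF L1_fin] by blast
      then show "a' \<in> L1 X (w @ [b])" using a by (simp add: L1_def)
    qed
    have H: "b1 = b2" if "2 \<le> ell X (w @ [b1])" "2 \<le> ell X (w @ [b2])" for b1 b2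
    proof -
      have "ell X (w @ [b1]) \<le> ell X w" unfolding ell_def by (intro card_mono L1_fin L1_snoc_sub)
      then show ?thesis using that False by simp
    qed
    show ?thesis using tree_lemma[OF w(1) bl sub H] .
  qed
  then show "eventually_dendric X" unfolding eventually_dendric_def eventually_dendric_thr_def by blast
qed

end
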